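(* Let $X$ be a real Hilbert space, $W$ a real Banach space, $A\subset W$ closed, $r>0$, $T>0$, and let $\{Z(w);w\in A\}$ be a family of $r$-prox-regular subsets of $X$ satisfying: for every $\varepsilon>0$ there is $\delta>0$ such that $|w-\hat w|_W<\delta$ implies $d_H(Z(w),Z(\hat w))<\varepsilon$. Let $y\in G_R(0,T;X)$ and $w\in G_R(0,T;W)$ be such that $w(t)\in A$ and $\mathrm{dist}(y(t),Z(w(t)))\le r/2$ for every $t\in[0,T]$. Let $\zeta:[0,T]\to X$ be defined so that $\zeta(t)$ is the only vector in $Z(w(t))$ such that $$\langle y(t)-\zeta(t),\zeta(t)-z\rangle+\frac{|y(t)-\zeta(t)|}{2r}|\zeta(t)-z|^2\ge0\quad\forall z\in Z(w(t)).$$ Then $\zeta\in G_R(0,T;X)$.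
   Context: $X$ is a real Hilbert space with scalar product $\langle\cdot,\cdot\rangle$ and norm $|\cdot|$; $W$ a real Banach space with norm $|\cdot|_W$; $\mathrm{dist}(x,Z)=\inf_{z\in Z}|x-z|$; $d_H(Z,\hat Z)=\max\{\sup_{z\in Z}\mathrm{dist}(z,\hat Z),\sup_{\hat z\in\hat Z}\mathrm{dist}(\hat z,Z)\}$. A closed connected $Z\subset X$ is $r$-prox-regular if for every $y\in X$ with $\mathrm{dist}(y,Z)=d\in(0,r)$ there is $x\in Z$ with $\mathrm{dist}(x+\frac rd(y-x),Z)=\frac rd|y-x|=r$. For a Banach space $E$, $G_R(0,T;E)$ is the space of right-continuous regulated functions $f:[0,T]\to E$, i.e. functions with one-sided limits $f(t-)$, $f(t+)$ at every point and $f(t+)=f(t)$. *)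

theory Defs
  imports "HOL-Analysis.Analysis"
begin

definition prox_regular :: "real \<Rightarrow> 'a::real_inner set \<Rightarrow> bool" where
  "prox_regular r Z \<longleftrightarrow> closed Z \<and> connected Z \<and>
     (\<forall>y d. infdist y Z = d \<and> 0 < d \<and> d < r \<longrightarrow>
        (\<exists>x\<in>Z. infdist (x + (r / d) *\<^sub>R (y - x)) Z = (r / d) * norm (y - x)
                 \<and> (r / d) * norm (y - x) = r))"

definition hdist :: "'a::metric_space set \<Rightarrow> 'a set \<Rightarrow> ereal" where
  "hdist Z Z' = max (SUP z\<in>Z. ereal (infdist z Z')) (SUP z'\<in>Z'. ereal (infdist z' Z))"

definition regulated_rc :: "real \<Rightarrow> (real \<Rightarrow> 'a::real_normed_vector) \<Rightarrow> bool" where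
  "regulated_rc T f \<longleftrightarrow>
     (\<forall>t\<in>{0<..T}. \<exists>l. (f \<longlongrightarrow> l) (at t within {0..<t})) \<and>
     (\<forall>t\<in>{0..<T}. (f \<longlongrightarrow> f t) (at t within {t<..T}))"

end

theory Submission
  imports Defs
begin

lemma infdist_lt_ex:
  assumes "A \<noteq> {}" "infdist x A < e"
  shows "\<exists>a\<in>A. dist x a < e"
  using assms by (simp add: infdist_notempty cINF_less_iff)

lemma hd_near:
  assumes "hdist Z Z' < ereal e" "z \<in> Z" "Z' \<noteq> {}"
  shows "\<exists>z'\<in>Z'. norm (z - z') < e"
proof -
  have "ereal (infdist z Z') \<le> (SUP z\<in>Z. ereal (infdist z Z'))"
    using assms(2) by (rule SUP_upper)
  also have "\<dots> \<le> hdist Z Z'" unfolding hdist_def by simp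
  finally have "ereal (infdist z Z') < ereal e" using assms(1) by (rule order.strict_trans1)
  then have "infdist z Z' < e" by simp
  then show ?thesis using infdist_lt_ex[OF assms(3)] by (simp add: dist_norm)
qed

lemma hd_near2:
  assumes "hdist Z Z' < ereal e" "z \<in> Z'" "Z \<noteq> {}"
  shows "\<exists>z'\<in>Z. norm (z - z') < e"
proof -
  have "hdist Z' Z = hdist Z Z'" unfolding hdist_def by (simp add: max.commute)
  then show ?thesis using hd_near[of Z' Z e z] assms by simp
qed

lemma sqrt_bound:
  fixes D a b :: real
  assumes "D\<^sup>2 \<le> 2*a*D + b" "a \<ge> 0" "b \<ge> 0" "D \<ge> 0"
  shows "D \<le> 2*a + sqrt b"
proof (cases "D \<le> 2*a")
  case True then show ?thesis using real_sqrt_ge_zero[OF assms(3)] by linarith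
next
  case False
  have "(D - 2*a)\<^sup>2 \<le> D * (D - 2*a)" using False assms by (simp add: power2_eq_square mult_right_mono)
  also have "\<dots> \<le> b" using assms(1) by (simp add: power2_eq_square algebra_simps)
  finally have "D - 2*a \<le> sqrt b" using False by (simp add: real_le_rsqrt)
  then show ?thesis by simp
qed

lemma norm_sq_expand:
  fixes u v :: "'x::real_inner"
  shows "(norm (v + c *\<^sub>R u))\<^sup>2 = (norm v)\<^sup>2 + 2 * c * inner u v + c\<^sup>2 * (norm u)\<^sup>2"
  unfolding power2_norm_eq_inner by (simp add: inner_add_left inner_add_right inner_commute power2_eq_square algebra_simps)

lemma proj_exists:
  fixes Z :: "'x::real_inner set"
  assumes pr: "prox_regular r Z" and r: "r > 0" and ne: "Z \<noteq> {}" and d: "infdist y Z < r"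
  shows "\<exists>x\<in>Z. norm (y - x) = infdist y Z \<and>
     (\<forall>z\<in>Z. inner (y - x) (x - z) + norm (y - x) / (2 * r) * (norm (x - z))\<^sup>2 \<ge> 0)"
proof (cases "infdist y Z = 0")
  case True
  have "closed Z" using pr unfolding prox_regular_def by simp
  then have "y \<in> Z" using True ne in_closed_iff_infdist_zero by blast
  then show ?thesis using True by (intro bexI[of _ y]) auto
next
  case False
  define d where "d = infdist y Z"
  have dpos: "d > 0" using False infdist_nonneg[of y Z] unfolding d_def by linarith
  have "d < r" using d d_def by simp
  then obtain x where x: "x \<in> Z" and h1: "infdist (x + (r / d) *\<^sub>R (y - x)) Z = (r / d) * norm (y - x)"
     and h2: "(r / d) * norm (y - x) = r"
    using pr dpos unfolding prox_regular_def d_def by blast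
  have nd: "norm (y - x) = d" using h2 r dpos by (simp add: field_simps)
  show ?thesis
  proof (intro bexI[of _ x] conjI ballI)
    show "x \<in> Z" by (rule x)
    show "norm (y - x) = infdist y Z" using nd d_def by simp
    fix z assume z: "z \<in> Z"
    define c where "c = r / d"
    have cpos: "c > 0" using r dpos c_def by simp
    have "r \<le> dist (x + c *\<^sub>R (y - x)) z"
      using infdist_le[OF z, of "x + c *\<^sub>R (y - x)"] h1 h2 c_def by simp
    then have "r\<^sup>2 \<le> (norm ((x - z) + c *\<^sub>R (y - x)))\<^sup>2"
      using r by (simp add: dist_norm algebra_simps power_mono)
    also have "\<dots> = (norm (x - z))\<^sup>2 + 2 * c * inner (y - x) (x - z) + c\<^sup>2 * (norm (y - x))\<^sup>2"
      by (rule norm_sq_expand)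
    also have "c\<^sup>2 * (norm (y - x))\<^sup>2 = r\<^sup>2" using nd c_def dpos by (simp add: field_simps power2_eq_square)
    finally have A: "0 \<le> (norm (x - z))\<^sup>2 + 2 * c * inner (y - x) (x - z)" by simp
    have "0 \<le> (d / (2 * r)) * ((norm (x - z))\<^sup>2 + 2 * c * inner (y - x) (x - z))"
      using A r dpos by simp
    also have "\<dots> = inner (y - x) (x - z) + d / (2 * r) * (norm (x - z))\<^sup>2"
      using r dpos c_def by (simp add: field_simps)
    finally show "inner (y - x) (x - z) + norm (y - x) / (2 * r) * (norm (x - z))\<^sup>2 \<ge> 0"
      using nd by simp
  qed
qed

lemma key_est:
  fixes y1 y2 \<zeta>1 \<zeta>2 z1 z2 :: "'x::real_inner"
  assumes r: "r > 0" and e: "e \<ge> 0"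
    and n1: "norm (y1 - \<zeta>1) \<le> r / 2" and n2: "norm (y2 - \<zeta>2) \<le> r / 2"
    and i1: "inner (y1 - \<zeta>1) (\<zeta>1 - z1) + norm (y1 - \<zeta>1) / (2 * r) * (norm (\<zeta>1 - z1))\<^sup>2 \<ge> 0"
    and i2: "inner (y2 - \<zeta>2) (\<zeta>2 - z2) + norm (y2 - \<zeta>2) / (2 * r) * (norm (\<zeta>2 - z2))\<^sup>2 \<ge> 0"
    and c1: "norm (\<zeta>2 - z1) \<le> e" and c2: "norm (\<zeta>1 - z2) \<le> e"
  shows "norm (\<zeta>1 - \<zeta>2) \<le> 2 * (norm (y1 - y2) + e) + sqrt (2 * r * e + e\<^sup>2)"
proof -
  define D where "D = norm (\<zeta>1 - \<zeta>2)"
  define c where "c = norm (y1 - y2)"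
  have D0: "D \<ge> 0" "c \<ge> 0" unfolding D_def c_def by auto
  have a1: "inner (y1 - \<zeta>1) (\<zeta>2 - z1) \<le> r / 2 * e"
    using norm_cauchy_schwarz[of "y1 - \<zeta>1" "\<zeta>2 - z1"] n1 c1 e
    by (smt (verit) mult_mono norm_ge_zero)
  have a2: "inner (y2 - \<zeta>2) (\<zeta>1 - z2) \<le> r / 2 * e"
    using norm_cauchy_schwarz[of "y2 - \<zeta>2" "\<zeta>1 - z2"] n2 c2 e
    by (smt (verit) mult_mono norm_ge_zero)
  have m1: "norm (\<zeta>1 - z1) \<le> D + e"
    using norm_triangle_ineq[of "\<zeta>1 - \<zeta>2" "\<zeta>2 - z1"] c1 unfolding D_def by simp
  have m2: "norm (\<zeta>2 - z2) \<le> D + e"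
    using norm_triangle_ineq[of "\<zeta>2 - \<zeta>1" "\<zeta>1 - z2"] c2 unfolding D_def by (simp add: norm_minus_commute)
  have q1: "norm (y1 - \<zeta>1) / (2 * r) * (norm (\<zeta>1 - z1))\<^sup>2 \<le> 1/4 * (D + e)\<^sup>2"
  proof (rule mult_mono)
    show "norm (y1 - \<zeta>1) / (2 * r) \<le> 1/4" using n1 r by (simp add: field_simps)
    show "(norm (\<zeta>1 - z1))\<^sup>2 \<le> (D + e)\<^sup>2" using m1 by (simp add: power_mono)
  qed auto
  have q2: "norm (y2 - \<zeta>2) / (2 * r) * (norm (\<zeta>2 - z2))\<^sup>2 \<le> 1/4 * (D + e)\<^sup>2"
  proof (rule mult_mono)
    show "norm (y2 - \<zeta>2) / (2 * r) \<le> 1/4" using n2 r by (simp add: field_simps)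
    show "(norm (\<zeta>2 - z2))\<^sup>2 \<le> (D + e)\<^sup>2" using m2 by (simp add: power_mono)
  qed auto
  have s1: "inner (y1 - \<zeta>1) (\<zeta>1 - z1) = inner (y1 - \<zeta>1) (\<zeta>1 - \<zeta>2) + inner (y1 - \<zeta>1) (\<zeta>2 - z1)"
    by (simp add: inner_diff_right)
  have s2: "inner (y2 - \<zeta>2) (\<zeta>2 - z2) = inner (y2 - \<zeta>2) (\<zeta>2 - \<zeta>1) + inner (y2 - \<zeta>2) (\<zeta>1 - z2)"
    by (simp add: inner_diff_right)
  have s3: "inner (y1 - \<zeta>1) (\<zeta>1 - \<zeta>2) + inner (y2 - \<zeta>2) (\<zeta>2 - \<zeta>1) = inner (y1 - y2) (\<zeta>1 - \<zeta>2) - D\<^sup>2"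
    unfolding D_def by (simp add: power2_norm_eq_inner inner_diff_left inner_diff_right inner_commute algebra_simps)
  have s4: "inner (y1 - y2) (\<zeta>1 - \<zeta>2) \<le> c * D"
    unfolding c_def D_def by (rule norm_cauchy_schwarz)
  have "0 \<le> c * D - D\<^sup>2 + r * e + 1/2 * (D + e)\<^sup>2"
    using i1 i2 q1 q2 s1 s2 s3 s4 a1 a2 by linarith
  then have "D\<^sup>2 \<le> 2 * (c + e) * D + (2 * r * e + e\<^sup>2)"
    by (simp add: power2_eq_square algebra_simps)
  then have "D \<le> 2 * (c + e) + sqrt (2 * r * e + e\<^sup>2)"
    by (rule sqrt_bound) (use D0 e r in auto)
  then show ?thesis unfolding D_def c_def .
qed

theorem corollary4p4:
  fixes Z :: "'w::banach \<Rightarrow> 'x::{real_inner, complete_space} set"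
    and A :: "'w set" and r T :: real
    and y :: "real \<Rightarrow> 'x" and w :: "real \<Rightarrow> 'w" and \<zeta> :: "real \<Rightarrow> 'x"
  assumes "closed A" and "r > 0" and "T > 0"
    and "\<forall>v\<in>A. prox_regular r (Z v)"
    and "\<forall>\<epsilon>>0. \<exists>\<delta>>0. \<forall>v\<in>A. \<forall>v'\<in>A. norm (v - v') < \<delta> \<longrightarrow> hdist (Z v) (Z v') < ereal \<epsilon>"
    and "regulated_rc T y" and "regulated_rc T w"
    and "\<forall>t\<in>{0..T}. w t \<in> A \<and> infdist (y t) (Z (w t)) \<le> r / 2"
    and "\<forall>t\<in>{0..T}. \<zeta> t \<in> Z (w t) \<and>
           (\<forall>z\<in>Z (w t). inner (y t - \<zeta> t) (\<zeta> t - z)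
               + norm (y t - \<zeta> t) / (2 * r) * (norm (\<zeta> t - z))\<^sup>2 \<ge> 0) \<and>
           (\<forall>v\<in>Z (w t). (\<forall>z\<in>Z (w t). inner (y t - v) (v - z)
               + norm (y t - v) / (2 * r) * (norm (v - z))\<^sup>2 \<ge> 0) \<longrightarrow> v = \<zeta> t)"
  shows "regulated_rc T \<zeta>"
proof -
  note r = \<open>r > 0\<close>
  have nz: "norm (y t - \<zeta> t) \<le> r / 2" if t: "t \<in> {0..T}" for t
  proof -
    have ne: "Z (w t) \<noteq> {}" using assms(9) t by blast
    have pr: "prox_regular r (Z (w t))" using assms(4,8) t by blast
    have "infdist (y t) (Z (w t)) < r" using assms(8) t r by force
    then obtain x where x: "x \<in> Z (w t)" "norm (y t - x) = infdist (y t) (Z (w t))"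
      "\<forall>z\<in>Z (w t). inner (y t - x) (x - z) + norm (y t - x) / (2 * r) * (norm (x - z))\<^sup>2 \<ge> 0"
      using proj_exists[OF pr r ne] by blast
    have "x = \<zeta> t" using assms(9) t x by blast
    then show ?thesis using x(2) assms(8) t by simp
  qed
  define h where "h = (\<lambda>e::real. 4 * e + sqrt (2 * r * e + e\<^sup>2))"
  have core: "norm (\<zeta> s - \<zeta> s') \<le> h e"
    if s: "s \<in> {0..T}" "s' \<in> {0..T}" and e: "e > 0" and yy: "norm (y s - y s') < e"
      and ww: "hdist (Z (w s)) (Z (w s')) < ereal e" for s s' e
  proof -
    have ne: "Z (w s) \<noteq> {}" "Z (w s') \<noteq> {}" using assms(9) s by blast+
    obtain z1 where z1: "z1 \<in> Z (w s)" "norm (\<zeta> s' - z1) < e"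
      using hd_near2[OF ww _ ne(1), of "\<zeta> s'"] assms(9) s by blast
    obtain z2 where z2: "z2 \<in> Z (w s')" "norm (\<zeta> s - z2) < e"
      using hd_near[OF ww _ ne(2), of "\<zeta> s"] assms(9) s by blast
    have "norm (\<zeta> s - \<zeta> s') \<le> 2 * (norm (y s - y s') + e) + sqrt (2 * r * e + e\<^sup>2)"
      apply (rule key_est[OF r _ nz[OF s(1)] nz[OF s(2)]])
      using assms(9) s z1 z2 e by auto
    then show ?thesis unfolding h_def using yy by simp
  qed
  have hsmall: "\<exists>e>0. h e < \<epsilon>" if "\<epsilon> > 0" for \<epsilon>
  proof -
    have "(h \<longlongrightarrow> h 0) (at_right 0)"
      unfolding h_def by (intro tendsto_intros)
    moreover have "h 0 = 0" unfolding h_def by simp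
    ultimately have "eventually (\<lambda>e. h e < \<epsilon>) (at_right 0)"
      using that by (metis order_tendstoD(2))
    then obtain b where b: "b > 0" "\<And>e. 0 < e \<Longrightarrow> e < b \<Longrightarrow> h e < \<epsilon>"
      unfolding eventually_at_right_field by auto
    show ?thesis using b(2)[of "b/2"] b(1) by (intro exI[of _ "b/2"]) auto
  qed
  have hdel: "\<exists>\<delta>>0. \<forall>s\<in>{0..T}. \<forall>s'\<in>{0..T}. norm (w s - w s') < \<delta> \<longrightarrow> hdist (Z (w s)) (Z (w s')) < ereal e"
    if epos: "e > 0" for e
  proof -
    obtain \<delta> where "\<delta> > 0" "\<forall>v\<in>A. \<forall>v'\<in>A. norm (v - v') < \<delta> \<longrightarrow> hdist (Z v) (Z v') < ereal e"
      using assms(5) epos by meson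
    then show ?thesis using assms(8) by (intro exI[of _ \<delta>]) auto
  qed
  show ?thesis
    unfolding regulated_rc_def
  proof (intro conjI ballI)
    fix t assume t: "t \<in> {0<..T}"
    define F where "F = at t within {0..<t}"
    obtain ly where ly: "(y \<longlongrightarrow> ly) F" using assms(6) t unfolding regulated_rc_def F_def by blast
    obtain lw where lw: "(w \<longlongrightarrow> lw) F" using assms(7) t unfolding regulated_rc_def F_def by blast
    have evT: "eventually (\<lambda>s. s \<in> {0..T}) F"
      unfolding F_def eventually_at_filter using t by (auto intro!: always_eventually)
    show "\<exists>l. (\<zeta> \<longlongrightarrow> l) F"
    proof (cases "F = bot")
      case True then show ?thesis by auto
    next
      case False
      have "cauchy_filter (filtermap \<zeta> F)"
        unfolding cauchy_filter_metric_filtermap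
      proof (intro allI impI)
        fix \<epsilon> :: real assume "\<epsilon> > 0"
        then obtain e where e: "e > 0" "h e < \<epsilon>" using hsmall by blast
        obtain \<delta> where d: "\<delta> > 0" "\<forall>s\<in>{0..T}. \<forall>s'\<in>{0..T}. norm (w s - w s') < \<delta> \<longrightarrow> hdist (Z (w s)) (Z (w s')) < ereal e"
          using hdel e by blast
        have ev1: "eventually (\<lambda>s. dist (y s) ly < e/2) F" using ly e(1) by (intro tendstoD) auto
        have ev2: "eventually (\<lambda>s. dist (w s) lw < \<delta>/2) F" using lw d(1) by (intro tendstoD) auto
        let ?P = "\<lambda>s. s \<in> {0..T} \<and> dist (y s) ly < e/2 \<and> dist (w s) lw < \<delta>/2"
        have "eventually ?P F" using evT ev1 ev2 by (auto elim: eventually_elim2 intro: eventually_conj)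
        moreover have "dist (\<zeta> s) (\<zeta> s') < \<epsilon>" if "?P s" "?P s'" for s s'
        proof -
          have "norm (y s - y s') < e" using that dist_triangle_half_l[of "y s" ly e "y s'"]
            by (simp add: dist_norm dist_commute)
          moreover have "norm (w s - w s') < \<delta>" using that dist_triangle_half_l[of "w s" lw \<delta> "w s'"]
            by (simp add: dist_norm dist_commute)
          ultimately have "norm (\<zeta> s - \<zeta> s') \<le> h e" using core that d e by blast
          then show ?thesis using e by (simp add: dist_norm)
        qed
        ultimately show "\<exists>P. eventually P F \<and> (\<forall>s s'. P s \<and> P s' \<longrightarrow> dist (\<zeta> s) (\<zeta> s') < \<epsilon>)"
          by blast
      qed
      then obtain c where "filtermap \<zeta> F \<le> nhds c"
        using cauchy_filter_complete_converges[OF _ complete_UNIV, of "filtermap \<zeta> F"] False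
        by (auto simp: filtermap_bot_iff)
      then show ?thesis unfolding filterlim_def by blast
    qed
  next
    fix t assume t: "t \<in> {0..<T}"
    define F where "F = at t within {t<..T}"
    have ly: "(y \<longlongrightarrow> y t) F" using assms(6) t unfolding regulated_rc_def F_def by blast
    have lw: "(w \<longlongrightarrow> w t) F" using assms(7) t unfolding regulated_rc_def F_def by blast
    have evT: "eventually (\<lambda>s. s \<in> {0..T}) F"
      unfolding F_def eventually_at_filter using t by (auto intro!: always_eventually)
    have tT: "t \<in> {0..T}" using t by auto
    show "(\<zeta> \<longlongrightarrow> \<zeta> t) F"
    proof (rule tendstoI)
      fix \<epsilon> :: real assume "\<epsilon> > 0"
      then obtain e where e: "e > 0" "h e < \<epsilon>" using hsmall by blast
      obtain \<delta> where d: "\<delta> > 0" "\<forall>s\<in>{0..T}. \<forall>s'\<in>{0..T}. norm (w s - w s') < \<delta> \<longrightarrow> hdist (Z (w s)) (Z (w s')) < ereal e"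
        using hdel e by blast
      have ev1: "eventually (\<lambda>s. dist (y s) (y t) < e) F" using ly e(1) by (intro tendstoD) auto
      have ev2: "eventually (\<lambda>s. dist (w s) (w t) < \<delta>) F" using lw d(1) by (intro tendstoD) auto
      show "eventually (\<lambda>s. dist (\<zeta> s) (\<zeta> t) < \<epsilon>) F"
        using evT ev1 ev2
      proof eventually_elim
        case (elim s)
        then have "norm (\<zeta> s - \<zeta> t) \<le> h e" using core[of s t e] tT d e by (simp add: dist_norm)
        then show ?case using e by (simp add: dist_norm)
      qed
    qed
  qed
qed

end
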